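(* Let $(Y,U)$ be discrete random variables with $Y$ taking values in a finite set $\mathcal{Y}$, let $\mu\in(0,\frac12)$ and $\epsilon>0$. If $$\Pr\left(|h(Y|U)-c|>\epsilon\right)<\mu$$ for some $c>0$, then $$\Pr\left(|h(Y|U)-\mathbb{H}(Y|U)|>2\epsilon+\mu\log_2\frac{|\mathcal{Y}|}{\mu^2}\right)<\mu.$$
   Context: $h(Y|U)$ denotes the random variable $-\log_2 p_{Y|U}(Y|U)$; $\mathbb{H}(Y|U)$ is the conditional entropy. *)

theory Defs
  imports "HOL-Probability.Probability"
begin

text \<open>The pair (Y,U) of discrete random variables is represented by its joint
distribution p :: ('y \<times> 'u) pmf (Y = fst, U = snd).\<close>

definition cond_info :: "('y \<times> 'u) pmf \<Rightarrow> 'y \<Rightarrow> 'u \<Rightarrow> real" where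
  "cond_info p y u = - log 2 (pmf p (y, u) / pmf (map_pmf snd p) u)"

definition cond_entropy :: "('y \<times> 'u) pmf \<Rightarrow> real" where
  "cond_entropy p = measure_pmf.expectation p (\<lambda>(y, u). cond_info p y u)"

end

theory Submission imports Defs begin

lemma pmf_le_marg:
  fixes p :: "('y \<times> 'u) pmf"
  shows "pmf p x \<le> pmf (map_pmf snd p) (snd x)"
proof -
  have "pmf p x = measure p {x}" by (simp add: measure_pmf_single)
  also have "\<dots> \<le> measure p (snd -` {snd x})"
    by (intro measure_pmf.finite_measure_mono) auto
  finally show ?thesis by (simp add: pmf_map)
qed

lemma cond_info_supp:
  fixes p :: "('y \<times> 'u) pmf"
  assumes "x \<in> set_pmf p"
  shows "cond_info p (fst x) (snd x) = log 2 (pmf (map_pmf snd p) (snd x) / pmf p x)"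
    and "pmf p x > 0" and "pmf (map_pmf snd p) (snd x) > 0"
    and "pmf (map_pmf snd p) (snd x) / pmf p x \<ge> 1"
proof -
  show 1: "pmf p x > 0" using assms by (simp add: pmf_positive)
  have le: "pmf p x \<le> pmf (map_pmf snd p) (snd x)" by (rule pmf_le_marg)
  show 2: "pmf (map_pmf snd p) (snd x) > 0" using 1 le by linarith
  show "pmf (map_pmf snd p) (snd x) / pmf p x \<ge> 1" using 1 le by simp
  show "cond_info p (fst x) (snd x) = log 2 (pmf (map_pmf snd p) (snd x) / pmf p x)"
    unfolding cond_info_def using 1 2 by (simp add: log_divide)
qed

lemma ratio_integral:
  fixes p :: "('y \<times> 'u) pmf" and Ys :: "'y set"
  assumes fin: "finite Ys" and supp: "\<forall>yu \<in> set_pmf p. fst yu \<in> Ys"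
  defines "r \<equiv> (\<lambda>x. pmf (map_pmf snd p) (snd x) / pmf p x)"
  shows "integrable p r" "measure_pmf.expectation p r \<le> real (card Ys)"
proof -
  define q where "q = map_pmf snd p"
  obtain x0 where x0: "x0 \<in> set_pmf p" using set_pmf_not_empty[of p] by blast
  have ne: "Ys \<noteq> {}" using supp x0 by auto
  define P where "P = pair_pmf (pmf_of_set Ys) q"
  have N: "real (card Ys) > 0" using fin ne by (simp add: card_gt_0_iff)
  have "(\<integral>\<^sup>+ x. ennreal (r x) \<partial>p) = (\<integral>\<^sup>+ x. ennreal (pmf p x) * ennreal (r x) \<partial>count_space UNIV)"
    by (rule nn_integral_measure_pmf)
  also have "\<dots> \<le> (\<integral>\<^sup>+ x. ennreal (real (card Ys)) * ennreal (pmf P x) \<partial>count_space UNIV)"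
  proof (rule nn_integral_mono)
    fix x :: "'y \<times> 'u"
    show "ennreal (pmf p x) * ennreal (r x) \<le> ennreal (real (card Ys)) * ennreal (pmf P x)"
    proof (cases "x \<in> set_pmf p")
      case True
      then have "pmf p x > 0" by (simp add: pmf_positive)
      moreover have "fst x \<in> Ys" using supp True by auto
      ultimately have "pmf p x * r x = real (card Ys) * pmf P x"
        using N by (cases x) (simp add: r_def P_def q_def pmf_pair ne fin)
      then show ?thesis by (simp add: ennreal_mult'[symmetric] flip: ennreal_mult)
    next
      case False
      then show ?thesis by (simp add: set_pmf_eq)
    qed
  qed
  also have "\<dots> = ennreal (real (card Ys)) * (\<integral>\<^sup>+ x. ennreal (pmf P x) \<partial>count_space UNIV)"
    by (rule nn_integral_cmult) auto
  also have "(\<integral>\<^sup>+ x. ennreal (pmf P x) \<partial>count_space UNIV) = 1"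
    by (simp add: nn_integral_pmf)
  finally have bound: "(\<integral>\<^sup>+ x. ennreal (r x) \<partial>p) \<le> ennreal (real (card Ys))" by simp
  have nn: "AE x in p. 0 \<le> r x" by (simp add: AE_measure_pmf_iff r_def)
  show int: "integrable p r"
    by (rule integrableI_nonneg) (use nn bound in \<open>auto simp: top_unique intro: le_less_trans\<close>)
  have "ennreal (measure_pmf.expectation p r) = (\<integral>\<^sup>+ x. ennreal (r x) \<partial>p)"
    by (rule nn_integral_eq_integral[symmetric]) (use int nn in auto)
  with bound have "ennreal (measure_pmf.expectation p r) \<le> ennreal (real (card Ys))" by simp
  then show "measure_pmf.expectation p r \<le> real (card Ys)" using ennreal_le_iff2 N by auto
qed


lemma pmf_int_ind:
  fixes f :: "'a \<Rightarrow> real"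
  shows "integrable (measure_pmf p) f \<Longrightarrow> integrable (measure_pmf p) (\<lambda>x. indicator B x * f x)"
  using integrable_real_mult_indicator[of B "measure_pmf p" f] by (simp add: mult.commute)

lemma h_integrable:
  fixes p :: "('y \<times> 'u) pmf" and Ys :: "'y set"
  assumes fin: "finite Ys" and supp: "\<forall>yu \<in> set_pmf p. fst yu \<in> Ys"
  shows "integrable p (\<lambda>(y, u). cond_info p y u)"
proof -
  define r where "r = (\<lambda>x. pmf (map_pmf snd p) (snd x) / pmf p x)"
  have ri: "integrable p r" using ratio_integral[OF fin supp] by (simp add: r_def)
  show ?thesis
  proof (rule Bochner_Integration.integrable_bound[where f = "\<lambda>x. r x / ln 2"])
    show "integrable p (\<lambda>x. r x / ln 2)" using ri by simp
    show "(\<lambda>(y, u). cond_info p y u) \<in> borel_measurable p" by simp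
    show "AE x in p. norm ((\<lambda>(y, u). cond_info p y u) x) \<le> norm (r x / ln 2)"
      unfolding AE_measure_pmf_iff
    proof
      fix x assume x: "x \<in> set_pmf p"
      note c = cond_info_supp[OF x]
      have rpos: "r x \<ge> 1" using c(4) by (simp add: r_def)
      have h: "(\<lambda>(y, u). cond_info p y u) x = ln (r x) / ln 2"
        using c(1) by (cases x) (simp add: r_def log_def)
      have "0 \<le> ln (r x)" using rpos by simp
      moreover have "ln (r x) \<le> r x" using ln_le_minus_one[of "r x"] rpos by simp
      ultimately show "norm ((\<lambda>(y, u). cond_info p y u) x) \<le> norm (r x / ln 2)"
        using rpos h by (simp add: divide_right_mono)
    qed
  qed
qed

lemma gibbs:
  fixes p :: "('y \<times> 'u) pmf" and Ys :: "'y set"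
  assumes fin: "finite Ys" and supp: "\<forall>yu \<in> set_pmf p. fst yu \<in> Ys" and k: "k > 0"
  shows "measure_pmf.expectation p (\<lambda>x. indicator B x * (\<lambda>(y, u). cond_info p y u) x)
    \<le> measure_pmf.prob p B * log 2 (real (card Ys) / k) + (k - measure_pmf.prob p B) / ln 2"
proof -
  define r where "r = (\<lambda>x. pmf (map_pmf snd p) (snd x) / pmf p x)"
  define N where "N = real (card Ys)"
  define h where "h = (\<lambda>(y, u). cond_info p y u)"
  have ri: "integrable p r" and rE: "measure_pmf.expectation p r \<le> N"
    using ratio_integral[OF fin supp] by (simp_all add: r_def N_def)
  have hi: "integrable p h" using h_integrable[OF fin supp] by (simp add: h_def)
  obtain x0 where x0: "x0 \<in> set_pmf p" using set_pmf_not_empty[of p] by blast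
  have "Ys \<noteq> {}" using supp x0 by auto
  then have N: "N > 0" using fin by (simp add: N_def card_gt_0_iff)
  define c where "c = log 2 (N / k) - 1 / ln 2"
  define g where "g = (\<lambda>x. indicator B x * c + (k / (N * ln 2)) * (indicator B x * r x))"
  have rBi: "integrable p (\<lambda>x. indicator B x * r x)"
    using ri by (rule pmf_int_ind)
  have gi: "integrable p g" unfolding g_def
  proof (rule Bochner_Integration.integrable_add)
    show "integrable p (\<lambda>x. indicator B x * c)"
      using pmf_int_ind[of p "\<lambda>_. c" B] by simp
    show "integrable p (\<lambda>x. k / (N * ln 2) * (indicator B x * r x))"
      using rBi by simp
  qed
  have "measure_pmf.expectation p (\<lambda>x. indicator B x * h x) \<le> measure_pmf.expectation p g"
  proof (rule integral_mono_AE)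
    show "integrable p (\<lambda>x. indicator B x * h x)"
      using hi by (rule pmf_int_ind)
    show "integrable p g" by (rule gi)
    show "AE x in p. indicator B x * h x \<le> g x"
      unfolding AE_measure_pmf_iff
    proof
      fix x assume x: "x \<in> set_pmf p"
      note cc = cond_info_supp[OF x]
      have rpos: "r x \<ge> 1" using cc(4) by (simp add: r_def)
      have hx: "h x = log 2 (r x)" using cc(1) by (cases x) (simp add: r_def h_def)
      have z: "r x * k / N > 0" using rpos k N by simp
      have "log 2 (r x) = log 2 (N / k) + log 2 (r x * k / N)"
        using rpos k N by (simp add: log_mult log_divide)
      also have "log 2 (r x * k / N) = ln (r x * k / N) / ln 2" by (simp add: log_def)
      also have "\<dots> \<le> (r x * k / N - 1) / ln 2"
        using ln_le_minus_one[OF z] by (simp add: divide_right_mono)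
      finally have "h x \<le> log 2 (N / k) + (r x * k / N - 1) / ln 2" using hx by simp
      also have "\<dots> = c + (k / (N * ln 2)) * r x"
        unfolding c_def using N by (simp add: field_simps)
      finally have "h x \<le> c + (k / (N * ln 2)) * r x" .
      then show "indicator B x * h x \<le> g x"
        by (cases "x \<in> B") (simp_all add: g_def)
    qed
  qed
  also have "measure_pmf.expectation p g
      = measure_pmf.prob p B * c + (k / (N * ln 2)) * measure_pmf.expectation p (\<lambda>x. indicator B x * r x)"
  proof -
    have i1: "integrable p (\<lambda>x. indicator B x * c)"
      using pmf_int_ind[of p "\<lambda>_. c" B] by simp
    have i2: "integrable p (\<lambda>x. k / (N * ln 2) * (indicator B x * r x))"
      using rBi by simp
    have "measure_pmf.expectation p g = measure_pmf.expectation p (\<lambda>x. indicator B x * c)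
        + measure_pmf.expectation p (\<lambda>x. k / (N * ln 2) * (indicator B x * r x))"
      unfolding g_def by (rule Bochner_Integration.integral_add[OF i1 i2])
    also have "measure_pmf.expectation p (\<lambda>x. indicator B x * c) = measure_pmf.prob p B * c"
      by simp
    also have "measure_pmf.expectation p (\<lambda>x. k / (N * ln 2) * (indicator B x * r x))
       = (k / (N * ln 2)) * measure_pmf.expectation p (\<lambda>x. indicator B x * r x)"
      by simp
    finally show ?thesis .
  qed
  also have "measure_pmf.expectation p (\<lambda>x. indicator B x * r x) \<le> N"
  proof -
    have "measure_pmf.expectation p (\<lambda>x. indicator B x * r x) \<le> measure_pmf.expectation p r"
      using rBi ri by (intro integral_mono_AE) (auto simp: AE_measure_pmf_iff r_def indicator_def)
    then show ?thesis using rE by simp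
  qed
  then have "(k / (N * ln 2)) * measure_pmf.expectation p (\<lambda>x. indicator B x * r x) \<le> (k / (N * ln 2)) * N"
    using k N by (intro mult_left_mono) auto
  then have "measure_pmf.prob p B * c + (k / (N * ln 2)) * measure_pmf.expectation p (\<lambda>x. indicator B x * r x)
     \<le> measure_pmf.prob p B * c + k / ln 2" using N by simp
  also have "\<dots> = measure_pmf.prob p B * log 2 (N / k) + (k - measure_pmf.prob p B) / ln 2"
    unfolding c_def by (simp add: field_simps)
  finally show ?thesis by (simp add: h_def N_def)
qed


lemma markov_h:
  fixes p :: "('y \<times> 'u) pmf" and Ys :: "'y set"
  assumes fin: "finite Ys" and supp: "\<forall>yu \<in> set_pmf p. fst yu \<in> Ys"
  shows "measure_pmf.prob p {x. a \<le> (\<lambda>(y, u). cond_info p y u) x} * 2 powr a \<le> real (card Ys)"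
proof -
  define r where "r = (\<lambda>x. pmf (map_pmf snd p) (snd x) / pmf p x)"
  define A where "A = {x. a \<le> (\<lambda>(y, u). cond_info p y u) x}"
  have ri: "integrable p r" and rE: "measure_pmf.expectation p r \<le> real (card Ys)"
    using ratio_integral[OF fin supp] by (simp_all add: r_def)
  have "measure_pmf.prob p A * 2 powr a = measure_pmf.expectation p (\<lambda>x. indicator A x * 2 powr a)"
    by simp
  also have "\<dots> \<le> measure_pmf.expectation p r"
  proof (rule integral_mono_AE)
    show "integrable p (\<lambda>x. indicator A x * 2 powr a)"
      using pmf_int_ind[of p "\<lambda>_. 2 powr a" A] by simp
    show "integrable p r" by (rule ri)
    show "AE x in p. indicator A x * 2 powr a \<le> r x"
      unfolding AE_measure_pmf_iff
    proof
      fix x assume x: "x \<in> set_pmf p"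
      note cc = cond_info_supp[OF x]
      have rpos: "r x \<ge> 1" using cc(4) by (simp add: r_def)
      have hx: "(\<lambda>(y, u). cond_info p y u) x = log 2 (r x)" using cc(1) by (cases x) (simp add: r_def)
      show "indicator A x * 2 powr a \<le> r x"
      proof (cases "x \<in> A")
        case True
        then have "a \<le> log 2 (r x)" using hx by (simp add: A_def)
        then have "2 powr a \<le> 2 powr (log 2 (r x))" by simp
        also have "\<dots> = r x" using rpos by simp
        finally show ?thesis using True by simp
      next
        case False
        then show ?thesis using rpos by simp
      qed
    qed
  qed
  finally show ?thesis using rE by (simp add: A_def)
qed

lemma real_ineq:
  fixes t \<mu> N :: real
  assumes "0 < t" "t < \<mu>" "\<mu> < 1/2" "1 \<le> N"
  shows "t * log 2 (N / t) \<le> \<mu> * log 2 (N / \<mu>\<^sup>2)"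
proof -
  define L where "L = - ln \<mu>"
  have mu0: "\<mu> > 0" using assms by simp
  have lnN: "ln N \<ge> 0" using assms by simp
  have ln2: "ln (2::real) \<ge> 1/2"
  proof -
    have "ln (1/2::real) \<le> 1/2 - 1" by (rule ln_le_minus_one) simp
    then show ?thesis by (simp add: ln_div)
  qed
  have "ln \<mu> < ln (1/2)" using assms mu0 by (subst ln_less_cancel_iff) auto
  then have "L > ln 2" unfolding L_def by (simp add: ln_div)
  have a: "ln (\<mu> / t) \<le> \<mu> / t - 1" using assms by (intro ln_le_minus_one) simp
  have "t * ln (N / t) = t * ln N + t * ln (\<mu> / t) + t * L"
    using assms mu0 by (simp add: L_def ln_div algebra_simps)
  also have "t * ln (\<mu> / t) \<le> t * (\<mu> / t - 1)" using a assms by (intro mult_left_mono) auto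
  also have "t * (\<mu> / t - 1) = \<mu> - t" using assms by (simp add: field_simps)
  also have "t * ln N \<le> \<mu> * ln N" using assms lnN by (intro mult_right_mono) auto
  finally have 1: "t * ln (N / t) \<le> \<mu> * ln N + (\<mu> - t + t * L)" by simp
  have 2: "\<mu> - t + t * L \<le> 2 * \<mu> * L"
  proof (cases "L \<ge> 1")
    case True
    have "t * L \<le> \<mu> * L" using True assms by (intro mult_right_mono) auto
    moreover have "\<mu> \<le> \<mu> * L" using True mu0 by simp
    ultimately show ?thesis using assms by linarith
  next
    case False
    have "t * L \<le> t" using False assms by (simp add: mult_le_cancel_left1 less_imp_le)
    moreover have "\<mu> * 1 \<le> \<mu> * (2 * L)" using \<open>L > ln 2\<close> ln2 mu0
      by (intro mult_left_mono) auto
    then have "\<mu> \<le> 2 * \<mu> * L" by simp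
    ultimately show ?thesis by linarith
  qed
  have 3: "\<mu> * ln (N / \<mu>\<^sup>2) = \<mu> * ln N + 2 * \<mu> * L"
    using assms mu0 by (simp add: L_def ln_div ln_mult power2_eq_square algebra_simps)
  have "t * ln (N / t) \<le> \<mu> * ln (N / \<mu>\<^sup>2)" using 1 2 3 by linarith
  then have "t * ln (N / t) / ln 2 \<le> \<mu> * ln (N / \<mu>\<^sup>2) / ln 2"
    by (intro divide_right_mono) auto
  then show ?thesis by (simp add: log_def)
qed


theorem corollary9:
  fixes p :: "('y \<times> 'u) pmf" and Ys :: "'y set" and \<mu> \<epsilon> c :: real
  assumes "finite Ys"
    and "\<forall>yu \<in> set_pmf p. fst yu \<in> Ys"
    and "0 < \<mu>" and "\<mu> < 1/2" and "0 < \<epsilon>" and "0 < c"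
    and "measure_pmf.prob p {(y, u). \<bar>cond_info p y u - c\<bar> > \<epsilon>} < \<mu>"
  shows "measure_pmf.prob p {(y, u). \<bar>cond_info p y u - cond_entropy p\<bar>
           > 2 * \<epsilon> + \<mu> * log 2 (real (card Ys) / \<mu>\<^sup>2)} < \<mu>"
proof -
  note fin = assms(1) and supp = assms(2)
  define hf where "hf = (\<lambda>(y, u). cond_info p y u)"
  define H where "H = cond_entropy p"
  define N where "N = real (card Ys)"
  define B where "B = {x. \<bar>hf x - c\<bar> > \<epsilon>}"
  define PB where "PB = measure_pmf.prob p B"
  define L where "L = \<mu> * log 2 (N / \<mu>\<^sup>2)"
  have Bdef: "{(y, u). \<bar>cond_info p y u - c\<bar> > \<epsilon>} = B" by (auto simp: B_def hf_def)
  have PB: "PB < \<mu>" using assms(7) Bdef by (simp add: PB_def)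
  have PB0: "PB \<ge> 0" by (simp add: PB_def)
  obtain x0 where x0: "x0 \<in> set_pmf p" using set_pmf_not_empty[of p] by blast
  have "Ys \<noteq> {}" using supp x0 by auto
  then have N1: "N \<ge> 1" using fin by (simp add: N_def Suc_le_eq card_gt_0_iff)
  have hi: "integrable p hf" using h_integrable[OF fin supp] by (simp add: hf_def)
  have hnn: "\<forall>x\<in>set_pmf p. hf x \<ge> 0"
  proof
    fix x assume x: "x \<in> set_pmf p"
    note cc = cond_info_supp[OF x]
    show "hf x \<ge> 0" using cc(1,4) by (cases x) (simp add: hf_def)
  qed
  have lmu: "log 2 \<mu> < -1"
  proof -
    have "log 2 \<mu> < log 2 (1/2)" using assms(3,4) by simp
    then show ?thesis by (simp add: log_divide)
  qed
  have L_eq: "L = \<mu> * log 2 N - 2 * \<mu> * log 2 \<mu>"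
    using N1 assms(3) by (simp add: L_def log_divide log_mult power2_eq_square algebra_simps)
  have logN: "log 2 N \<ge> 0" using N1 by simp
  have L_ge: "L \<ge> \<mu> * log 2 N + 2 * \<mu>"
  proof -
    have "\<mu> * (-1) \<ge> \<mu> * log 2 \<mu>" using lmu assms(3) by (intro mult_left_mono) auto
    then show ?thesis using L_eq by linarith
  qed
  have L0: "L \<ge> 0" using L_ge assms(3) logN by (smt (verit) mult_nonneg_nonneg)
  define g1 where "g1 = (\<lambda>x. indicator (- B) x * (hf x - c))"
  define g2 where "g2 = (\<lambda>x. indicator B x * hf x)"
  define g3 where "g3 = (\<lambda>x. indicator (- B) x * c)"
  have i1: "integrable p g1" unfolding g1_def using hi by (intro pmf_int_ind) simp
  have i2: "integrable p g2" unfolding g2_def using hi by (intro pmf_int_ind)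
  have i3: "integrable p g3" unfolding g3_def using pmf_int_ind[of p "\<lambda>_. c" "- B"] by simp
  have split: "hf = (\<lambda>x. g1 x + g2 x + g3 x)"
    by (rule ext) (simp add: g1_def g2_def g3_def indicator_def algebra_simps)
  have "H = measure_pmf.expectation p hf"
    by (simp add: H_def cond_entropy_def hf_def)
  also have "\<dots> = measure_pmf.expectation p g1 + measure_pmf.expectation p g2 + measure_pmf.expectation p g3"
    by (subst split) (simp add: Bochner_Integration.integral_add i1 i2 i3)
  also have "measure_pmf.expectation p g3 = (1 - PB) * c"
    by (simp add: g3_def PB_def measure_pmf.prob_compl[symmetric] Compl_eq_Diff_UNIV)
  finally have Heq: "H - c = measure_pmf.expectation p g1 + measure_pmf.expectation p g2 - c * PB"
    by (simp add: algebra_simps)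
  have g1u: "measure_pmf.expectation p g1 \<le> \<epsilon>"
  proof -
    have "measure_pmf.expectation p g1 \<le> measure_pmf.expectation p (\<lambda>_. \<epsilon>)"
      using i1 assms(5) by (intro integral_mono) (auto simp: g1_def B_def indicator_def)
    then show ?thesis by simp
  qed
  have g1l: "measure_pmf.expectation p g1 \<ge> - \<epsilon> * (1 - PB)"
  proof -
    have "measure_pmf.expectation p (\<lambda>x. indicator (- B) x * (- \<epsilon>)) \<le> measure_pmf.expectation p g1"
      using i1 pmf_int_ind[of p "\<lambda>_. - \<epsilon>" "- B"] assms(5)
      by (intro integral_mono) (auto simp: g1_def B_def indicator_def)
    also have "measure_pmf.expectation p (\<lambda>x. indicator (- B) x * (- \<epsilon>)) = - \<epsilon> * (1 - PB)"
      by (simp add: PB_def measure_pmf.prob_compl[symmetric] Compl_eq_Diff_UNIV)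
    finally show ?thesis .
  qed
  have g2l: "measure_pmf.expectation p g2 \<ge> 0"
    using hnn by (intro integral_nonneg_AE) (auto simp: AE_measure_pmf_iff g2_def)
  have g2u: "measure_pmf.expectation p g2 \<le> L"
  proof (cases "PB = 0")
    case True
    then have "set_pmf p \<inter> B = {}" by (simp add: PB_def measure_pmf_zero_iff)
    then have "AE x in p. g2 x = 0" by (auto simp: AE_measure_pmf_iff g2_def indicator_def)
    then have "measure_pmf.expectation p g2 = 0" by (simp add: integral_eq_zero_AE)
    then show ?thesis using L0 by simp
  next
    case False
    then have PBp: "PB > 0" using PB0 by simp
    have "measure_pmf.expectation p g2 \<le> PB * log 2 (N / PB) + (PB - PB) / ln 2"
      using gibbs[OF fin supp PBp, of B] by (simp add: g2_def hf_def PB_def N_def)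
    also have "\<dots> = PB * log 2 (N / PB)" by simp
    also have "\<dots> \<le> L" unfolding L_def using real_ineq[OF PBp PB assms(4) N1] .
    finally show ?thesis .
  qed
  have tail: "c - \<epsilon> < 1 + log 2 N"
  proof -
    have sub: "- B \<subseteq> {x. c - \<epsilon> \<le> hf x}" by (auto simp: B_def)
    have "1 - PB \<le> measure_pmf.prob p {x. c - \<epsilon> \<le> hf x}"
      unfolding PB_def using measure_pmf.finite_measure_mono[OF sub]
      by (simp add: measure_pmf.prob_compl[symmetric] Compl_eq_Diff_UNIV)
    moreover have "measure_pmf.prob p {x. c - \<epsilon> \<le> hf x} * 2 powr (c - \<epsilon>) \<le> N"
      using markov_h[OF fin supp, of "c - \<epsilon>"] by (simp add: hf_def N_def)
    ultimately have "(1 - PB) * 2 powr (c - \<epsilon>) \<le> N"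
      by (smt (verit) mult_right_mono powr_ge_zero)
    moreover have "1 - PB > 1/2" using PB assms(4) by simp
    ultimately have "(1/2) * 2 powr (c - \<epsilon>) < N"
      by (smt (verit) mult_strict_right_mono powr_gt_zero)
    then have "2 powr (c - \<epsilon>) < 2 * N" by simp
    then have "log 2 (2 powr (c - \<epsilon>)) < log 2 (2 * N)"
      using N1 by (subst log_less_cancel_iff) auto
    then show ?thesis using N1 by (simp add: log_mult)
  qed
  have cPB: "(c - \<epsilon>) * PB \<le> L"
  proof (cases "c \<le> \<epsilon>")
    case True
    have "(c - \<epsilon>) * PB \<le> 0" using True PB0 by (simp add: mult_nonpos_nonneg)
    then show ?thesis using L0 by simp
  next
    case False
    have "(c - \<epsilon>) * PB \<le> (1 + log 2 N) * \<mu>"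
      using tail PB PB0 False logN by (intro mult_mono) auto
    also have "\<dots> = \<mu> + \<mu> * log 2 N" by (simp add: algebra_simps)
    finally show ?thesis using L_ge assms(3) by linarith
  qed
  have cPB0: "c * PB \<ge> 0" using assms(6) PB0 by simp
  have Hc1: "H - c \<le> \<epsilon> + L" using Heq g1u g2u cPB0 by linarith
  have Hc2: "H - c \<ge> - \<epsilon> - L"
  proof -
    have "H - c \<ge> - \<epsilon> * (1 - PB) + 0 - c * PB" using Heq g1l g2l by linarith
    also have "- \<epsilon> * (1 - PB) + 0 - c * PB = - \<epsilon> - (c - \<epsilon>) * PB" by (simp add: algebra_simps)
    finally show ?thesis using cPB by linarith
  qed
  have Hc: "\<bar>H - c\<bar> \<le> \<epsilon> + L" using Hc1 Hc2 by linarith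
  have sub: "{(y, u). \<bar>cond_info p y u - cond_entropy p\<bar> > 2 * \<epsilon> + \<mu> * log 2 (real (card Ys) / \<mu>\<^sup>2)} \<subseteq> B"
  proof
    fix x assume "x \<in> {(y, u). \<bar>cond_info p y u - cond_entropy p\<bar> > 2 * \<epsilon> + \<mu> * log 2 (real (card Ys) / \<mu>\<^sup>2)}"
    then have "\<bar>hf x - H\<bar> > 2 * \<epsilon> + L" by (cases x) (simp add: hf_def H_def L_def N_def)
    then show "x \<in> B" using Hc by (simp add: B_def)
  qed
  have "measure_pmf.prob p {(y, u). \<bar>cond_info p y u - cond_entropy p\<bar> > 2 * \<epsilon> + \<mu> * log 2 (real (card Ys) / \<mu>\<^sup>2)} \<le> PB"
    unfolding PB_def by (rule measure_pmf.finite_measure_mono[OF sub]) simp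
  then show ?thesis using PB by linarith
qed

end
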